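(* Let $L:\mathbb{T}^d\times\mathbb{R}^d\to\mathbb{R}$ be continuous with $\lim_{|v|\to\infty}\inf_{x\in\mathbb{T}^d}L(x,v)/|v|=+\infty$, and let $(\varphi,\overline{H})$, with $\varphi:\mathbb{T}^d\to\mathbb{R}$ Lipschitz continuous and $\overline{H}\in\mathbb{R}$, be a supersolution to $H(x,-\nabla\varphi)=\overline{H}$. Given $\varepsilon>0$, there exist $\varkappa_0>0$ and a function $\delta:(0,\varkappa_0]\to(0,+\infty)$ such that for all $r>0$, $\varkappa\in(0,\varkappa_0]$, all partitions $\Delta$ of $[0,r]$ with $d(\Delta)\le\delta(\varkappa)$, and every $y\in\mathbb{T}^d$, \[\varphi(x_{y,\varkappa,r,\Delta}(r))+\int_0^rL(x_{y,\varkappa,r,\Delta}(t),v_{y,\varkappa,r,\Delta}(t))\,dt\le\varphi(y)-\overline{H}r+(r+1)\varepsilon.\]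
   Context: $\mathbb{T}^d=\mathbb{R}^d/\mathbb{Z}^d$; $x+v$ is the translate of $x\in\mathbb{T}^d$ by $v\in\mathbb{R}^d$. Vectors in $\mathbb{R}^d$ are columns, covectors rows. Hamiltonian: $H(x,p)=\max_{v\in\mathbb{R}^d}[pv-L(x,v)]$. Hadamard subdifferential: $p\in\partial_D^-\varphi(x)$ iff for all $w\in\mathbb{R}^d$, $\liminf_{h\downarrow0,w'\to w}\frac{\varphi(x+hw')-\varphi(x)}{h}\ge pw$. A pair $(\varphi,\overline{H})$ with $\varphi$ lower semicontinuous is a supersolution to $H(x,-\nabla\varphi)=\overline{H}$ if $H(x,-p)\ge\overline{H}$ for all $x\in\mathbb{T}^d$ and $p\in\partial_D^-\varphi(x)$. Moreau–Yosida transform: $\varphi_\varkappa(x)=\inf\{\varphi(x+v)+\frac{1}{2\varkappa^2}|v|^2:v\in\mathbb{R}^d\}$; $b_\varkappa[x]$ is a chosen vector with $\varphi(x+b_\varkappa[x])+\frac{1}{2\varkappa^2}|b_\varkappa[x]|^2=\varphi_\varkappa(x)$, $p_\varkappa[x]=\frac{1}{\varkappa^2}(-b_\varkappa[x])^\top$, and $\mathbbm{v}_\varkappa[x]$ is a chosen element of $\operatorname{Argmax}_{v\in\mathbb{R}^d}[-p_\varkappa[x]v-L(x+b_\varkappa[x],v)]$. For a partition $\Delta=\{t_i\}_{i=0}^n$, $0=t_0<\dots<t_n=r$, its fineness is $d(\Delta)=\max_i(t_{i+1}-t_i)$. For $y\in\mathbb{T}^d$ the motion and control are defined recursively: $x_{y,\varkappa,r,\Delta}(0)=y$;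 for $t\in[t_i,t_{i+1})$, $v_{y,\varkappa,r,\Delta}(t)=\mathbbm{v}_\varkappa[x_{y,\varkappa,r,\Delta}(t_i)]$, and for $t\in[t_i,t_{i+1}]$, $x_{y,\varkappa,r,\Delta}(t)=x_{y,\varkappa,r,\Delta}(t_i)+(t-t_i)\mathbbm{v}_\varkappa[x_{y,\varkappa,r,\Delta}(t_i)]$. *)

theory Defs
  imports "HOL-Analysis.Analysis" "HOL-Library.Extended_Real"
begin

text \<open>The torus T^d = R^d / Z^d is represented through Z^d-periodic lifts to R^d,
  with R^d rendered as real^'d for an arbitrary finite index type 'd.
  Row covectors p are rendered as vectors, pv as the inner product.\<close>

definition int_vec :: "real^'d \<Rightarrow> bool" where
  "int_vec z \<longleftrightarrow> (\<forall>i. z $ i \<in> \<int>)"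

definition periodic :: "(real^'d \<Rightarrow> 'b) \<Rightarrow> bool" where
  "periodic f \<longleftrightarrow> (\<forall>x z. int_vec z \<longrightarrow> f (x + z) = f x)"

definition hamiltonian :: "(real^'d \<Rightarrow> real^'d \<Rightarrow> real) \<Rightarrow> real^'d \<Rightarrow> real^'d \<Rightarrow> real" where
  "hamiltonian L x p = (SUP v. p \<bullet> v - L x v)"

definition hadamard_subdiff :: "(real^'d \<Rightarrow> real) \<Rightarrow> real^'d \<Rightarrow> (real^'d) set" where
  "hadamard_subdiff \<phi> x = {p. \<forall>w.
     Liminf (at_right 0 \<times>\<^sub>F nhds w) (\<lambda>(h, w'). ereal ((\<phi> (x + h *\<^sub>R w') - \<phi> x) / h))
       \<ge> ereal (p \<bullet> w)}"

definition lsc :: "(real^'d \<Rightarrow> real) \<Rightarrow> bool" where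
  "lsc f \<longleftrightarrow> (\<forall>c. closed {x. f x \<le> c})"

definition supersolution :: "(real^'d \<Rightarrow> real^'d \<Rightarrow> real) \<Rightarrow> (real^'d \<Rightarrow> real) \<Rightarrow> real \<Rightarrow> bool" where
  "supersolution L \<phi> Hbar \<longleftrightarrow> lsc \<phi> \<and>
     (\<forall>x p. p \<in> hadamard_subdiff \<phi> x \<longrightarrow> hamiltonian L x (- p) \<ge> Hbar)"

definition moreau_yosida :: "(real^'d \<Rightarrow> real) \<Rightarrow> real \<Rightarrow> real^'d \<Rightarrow> real" where
  "moreau_yosida \<phi> \<kappa> x = (INF v. \<phi> (x + v) + (norm v)\<^sup>2 / (2 * \<kappa>\<^sup>2))"

definition is_partition :: "(nat \<Rightarrow> real) \<Rightarrow> nat \<Rightarrow> real \<Rightarrow> bool" where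
  "is_partition t n r \<longleftrightarrow> t 0 = 0 \<and> t n = r \<and> (\<forall>i<n. t i < t (Suc i))"

definition fineness :: "(nat \<Rightarrow> real) \<Rightarrow> nat \<Rightarrow> real" where
  "fineness t n = Max {t (Suc i) - t i | i. i < n}"

primrec motion_node :: "(real^'d \<Rightarrow> real^'d) \<Rightarrow> (nat \<Rightarrow> real) \<Rightarrow> real^'d \<Rightarrow> nat \<Rightarrow> real^'d" where
  "motion_node V t y 0 = y"
| "motion_node V t y (Suc i) = motion_node V t y i + (t (Suc i) - t i) *\<^sub>R V (motion_node V t y i)"

text \<open>Index i of the partition interval [t_i, t_{i+1}) containing s (the last
  interval is closed).\<close>
definition seg_index :: "(nat \<Rightarrow> real) \<Rightarrow> nat \<Rightarrow> real \<Rightarrow> nat" where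
  "seg_index t n s = (GREATEST i. i < n \<and> t i \<le> s)"

definition motion :: "(real^'d \<Rightarrow> real^'d) \<Rightarrow> (nat \<Rightarrow> real) \<Rightarrow> nat \<Rightarrow> real^'d \<Rightarrow> real \<Rightarrow> real^'d" where
  "motion V t n y s = (let i = seg_index t n s in
      motion_node V t y i + (s - t i) *\<^sub>R V (motion_node V t y i))"

definition control :: "(real^'d \<Rightarrow> real^'d) \<Rightarrow> (nat \<Rightarrow> real) \<Rightarrow> nat \<Rightarrow> real^'d \<Rightarrow> real \<Rightarrow> real^'d" where
  "control V t n y s = V (motion_node V t y (seg_index t n s))"

end

theory Submission
  imports Defs
begin

lemma subdiff_lemma:
  fixes \<phi> :: "real^'d \<Rightarrow> real" and x b :: "real^'d" and \<kappa> :: real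
  assumes k: "\<kappa> > 0"
    and mn: "\<And>u. \<phi> (x + b) + (norm b)\<^sup>2 / (2 * \<kappa>\<^sup>2) \<le> \<phi> (x + u) + (norm u)\<^sup>2 / (2 * \<kappa>\<^sup>2)"
  shows "(1 / \<kappa>\<^sup>2) *\<^sub>R (- b) \<in> hadamard_subdiff \<phi> (x + b)"
  unfolding hadamard_subdiff_def
proof (intro CollectI allI)
  fix w :: "real^'d"
  define p where "p = (1 / \<kappa>\<^sup>2) *\<^sub>R (- b)"
  define F where "F = (at_right (0::real) \<times>\<^sub>F nhds w)"
  define gg where "gg = (\<lambda>z::real \<times> (real^'d). ereal (p \<bullet> snd z - fst z * (norm (snd z))\<^sup>2 / (2 * \<kappa>\<^sup>2)))"
  have k2: "\<kappa>\<^sup>2 > 0" using k by simp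
  have key: "p \<bullet> w' - h * (norm w')\<^sup>2 / (2 * \<kappa>\<^sup>2) \<le> (\<phi> (x + b + h *\<^sub>R w') - \<phi> (x + b)) / h"
    if h: "h > 0" for h w'
  proof -
    have "\<phi> (x + b) + (norm b)\<^sup>2 / (2 * \<kappa>\<^sup>2) \<le> \<phi> (x + (b + h *\<^sub>R w')) + (norm (b + h *\<^sub>R w'))\<^sup>2 / (2 * \<kappa>\<^sup>2)"
      by (rule mn)
    moreover have "(norm (b + h *\<^sub>R w'))\<^sup>2 = (norm b)\<^sup>2 + 2 * h * (b \<bullet> w') + h\<^sup>2 * (norm w')\<^sup>2"
      by (simp only: power2_norm_eq_inner inner_add_left inner_add_right inner_scaleR_left inner_scaleR_right inner_commute[of w' b]) (simp add: power2_eq_square algebra_simps)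
    ultimately have "- (2 * h * (b \<bullet> w') + h\<^sup>2 * (norm w')\<^sup>2) / (2 * \<kappa>\<^sup>2) \<le> \<phi> (x + b + h *\<^sub>R w') - \<phi> (x + b)"
      using k2 by (simp add: add_divide_distrib diff_divide_distrib algebra_simps)
    moreover have "- (2 * h * (b \<bullet> w') + h\<^sup>2 * (norm w')\<^sup>2) / (2 * \<kappa>\<^sup>2) = h * (p \<bullet> w' - h * (norm w')\<^sup>2 / (2 * \<kappa>\<^sup>2))"
      using k by (simp add: p_def field_simps power2_eq_square)
    ultimately show ?thesis using h by (simp add: pos_le_divide_eq mult.commute)
  qed
  have ev: "eventually (\<lambda>z. gg z \<le> (\<lambda>(h, w'). ereal ((\<phi> (x + b + h *\<^sub>R w') - \<phi> (x + b)) / h)) z) F"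
    unfolding F_def eventually_prod_filter
    apply (rule exI[of _ "\<lambda>h. h > 0"], rule exI[of _ "\<lambda>_. True"])
    using key by (auto simp: gg_def eventually_at_right_less)
  have nb: "F \<noteq> bot" unfolding F_def prod_filter_eq_bot by auto
  have "((\<lambda>z. fst z) \<longlongrightarrow> 0) F"
    unfolding F_def using filterlim_fst[of "at_right (0::real)" "nhds w"]
    by (metis at_within_le_nhds filterlim_mono order_refl)
  moreover have "((\<lambda>z. snd z) \<longlongrightarrow> w) F"
    unfolding F_def by (rule filterlim_snd)
  ultimately have "(gg \<longlongrightarrow> ereal (p \<bullet> w - 0 * (norm w)\<^sup>2 / (2 * \<kappa>\<^sup>2))) F"
    unfolding gg_def using k2 by (intro tendsto_intros lim_ereal[THEN iffD2]) auto
  hence "Liminf F gg = ereal (p \<bullet> w)" using nb by (intro lim_imp_Liminf) auto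
  moreover have "Liminf F gg \<le> Liminf F (\<lambda>(h, w'). ereal ((\<phi> (x + b + h *\<^sub>R w') - \<phi> (x + b)) / h))"
    by (rule Liminf_mono[OF ev])
  ultimately show "ereal (p \<bullet> w) \<le> Liminf (at_right 0 \<times>\<^sub>F nhds w) (\<lambda>(h, w'). ereal ((\<phi> (x + b + h *\<^sub>R w') - \<phi> (x + b)) / h))"
    by (simp add: F_def)
qed

lemma per_shift:
  fixes a :: "real^'d"
  obtains z where "int_vec z" "\<And>i. 0 \<le> (a + z) $ i \<and> (a + z) $ i \<le> 1"
proof
  define z where "z = (\<chi> i. - real_of_int (floor (a $ i)) :: real^'d)"
  show "int_vec z" unfolding int_vec_def z_def by simp
  fix i
  show "0 \<le> (a + z) $ i \<and> (a + z) $ i \<le> 1" unfolding z_def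
    apply simp using of_int_floor_le[of "a $ i"] real_of_int_floor_add_one_gt[of "a $ i"] by linarith
qed

lemma per_bdd_below:
  fixes f :: "real^'d \<Rightarrow> real"
  assumes "periodic f" "continuous_on UNIV f"
  shows "bdd_below (range f)"
proof -
  have c: "compact (f ` cbox (vec 0) (vec 1))"
    by (rule compact_continuous_image) (auto intro: continuous_on_subset[OF assms(2)])
  have "range f \<subseteq> f ` cbox (vec 0) (vec 1)"
  proof
    fix y assume "y \<in> range f"
    then obtain a where y: "y = f a" by auto
    obtain z where z: "int_vec z" "\<And>i. 0 \<le> (a + z) $ i \<and> (a + z) $ i \<le> 1" using per_shift[of a] by metis
    have "f (a + z) = f a" using assms(1) z(1) unfolding periodic_def by blast
    moreover have "a + z \<in> cbox (vec 0) (vec 1)" using z(2) by (simp add: mem_box_cart)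
    ultimately show "y \<in> f ` cbox (vec 0) (vec 1)" using y by (metis image_eqI)
  qed
  moreover have "bdd_below (f ` cbox (vec 0) (vec 1))"
    using c by (simp add: bounded_imp_bdd_below compact_imp_bounded)
  ultimately show ?thesis by (meson bdd_below_mono)
qed

lemma per_uc:
  fixes L :: "real^'d \<Rightarrow> real^'d \<Rightarrow> real"
  assumes L_cont: "continuous_on UNIV (\<lambda>(x, v). L x v)"
    and L_per: "\<And>v. periodic (\<lambda>x. L x v)"
    and e: "e > 0"
  shows "\<exists>\<eta>>0. \<forall>a a' v. norm v \<le> R \<longrightarrow> dist a a' \<le> \<eta> \<longrightarrow> \<bar>L a v - L a' v\<bar> \<le> e"
proof -
  define S where "S = cbox (vec (-1)::real^'d) (vec 2) \<times> cball (0::real^'d) R"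
  have "compact S" unfolding S_def by (intro compact_Times compact_cbox compact_cball)
  moreover have "continuous_on S (\<lambda>(x, v). L x v)" by (rule continuous_on_subset[OF L_cont]) auto
  ultimately have uc: "uniformly_continuous_on S (\<lambda>(x, v). L x v)"
    by (intro compact_uniformly_continuous)
  obtain d where d: "d > 0" "\<And>p p'. p \<in> S \<Longrightarrow> p' \<in> S \<Longrightarrow> dist p' p < d \<Longrightarrow>
      dist ((\<lambda>(x, v). L x v) p') ((\<lambda>(x, v). L x v) p) < e"
    using uc e unfolding uniformly_continuous_on_def by metis
  define \<eta> where "\<eta> = min 1 (d / 2)"
  have "\<eta> > 0" using d by (simp add: \<eta>_def)
  moreover have "\<bar>L a v - L a' v\<bar> \<le> e" if v: "norm v \<le> R" and aa: "dist a a' \<le> \<eta>" for a a' v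
  proof -
    obtain z where z: "int_vec z" "\<And>i. 0 \<le> (a + z) $ i \<and> (a + z) $ i \<le> 1" using per_shift[of a] by metis
    have comp: "\<bar>(a' + z) $ i - (a + z) $ i\<bar> \<le> 1" for i
    proof -
      have "\<bar>(a' - a) $ i\<bar> \<le> norm (a' - a)" by (rule component_le_norm_cart)
      also have "\<dots> = dist a a'" by (simp add: dist_norm norm_minus_commute)
      finally show ?thesis using aa by (simp add: \<eta>_def)
    qed
    have m1: "(a + z, v) \<in> S" unfolding S_def mem_Times_iff mem_box_cart using v
    proof (intro conjI allI)
      fix i show "vec (- 1) $ i \<le> fst (a + z, v) $ i" "fst (a + z, v) $ i \<le> vec 2 $ i"
        using z(2)[of i] by auto
    qed auto
    have m2: "(a' + z, v) \<in> S" unfolding S_def mem_Times_iff mem_box_cart using v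
    proof (intro conjI allI)
      fix i show "vec (- 1) $ i \<le> fst (a' + z, v) $ i" "fst (a' + z, v) $ i \<le> vec 2 $ i"
        using z(2)[of i] comp[of i] by (auto simp del: vector_add_component)
    qed auto
    have "dist (a' + z, v) (a + z, v) = dist a' a" by (simp add: dist_Pair_Pair dist_norm)
    also have "\<dots> < d" using aa d(1) by (simp add: \<eta>_def dist_commute)
    finally have "dist (L (a' + z) v) (L (a + z) v) < e" using d(2)[OF m1 m2] by simp
    moreover have "L (a' + z) v = L a' v" "L (a + z) v = L a v"
      using L_per[of v] z(1) unfolding periodic_def by auto
    ultimately show ?thesis by (simp add: dist_real_def abs_minus_commute)
  qed
  ultimately show ?thesis by blast
qed

lemma part_mono:
  assumes "is_partition t n r" "i < j" "j \<le> n"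
  shows "t i < t j"
  using assms(2,3)
proof (induction j)
  case 0 then show ?case by simp
next
  case (Suc j)
  have s: "t j < t (Suc j)" using assms(1) Suc.prems unfolding is_partition_def by auto
  show ?case
  proof (cases "i = j")
    case True then show ?thesis using s by simp
  next
    case False then show ?thesis using Suc s by auto
  qed
qed

lemma part_mono_le:
  assumes "is_partition t n r" "i \<le> j" "j \<le> n"
  shows "t i \<le> t j"
  using part_mono[OF assms(1)] assms(2,3) by (cases "i = j") (auto simp: less_imp_le)

lemma seg_idx:
  assumes P: "is_partition t n r" and m: "m < n" and s: "t m \<le> s" "s < t (Suc m)"
  shows "seg_index t n s = m"
  unfolding seg_index_def
proof (rule Greatest_equality)
  show "m < n \<and> t m \<le> s" using m s by simp
  fix i assume i: "i < n \<and> t i \<le> s"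
  show "i \<le> m"
  proof (rule ccontr)
    assume "\<not> i \<le> m"
    hence "Suc m \<le> i" by simp
    hence "t (Suc m) \<le> t i" using part_mono_le[OF P, of "Suc m" i] i by simp
    thus False using i s by simp
  qed
qed

lemma seg_end:
  assumes P: "is_partition t n r" and n: "n > 0"
  shows "seg_index t n r = n - 1"
  unfolding seg_index_def
proof (rule Greatest_equality)
  have "t (n - 1) \<le> t n" using part_mono_le[OF P, of "n - 1" n] by simp
  thus "n - 1 < n \<and> t (n - 1) \<le> r" using n P by (simp add: is_partition_def)
  fix i assume "i < n \<and> t i \<le> r" thus "i \<le> n - 1" by linarith
qed

lemma motion_end:
  assumes P: "is_partition t n r" and n: "n > 0"
  shows "motion V t n y r = motion_node V t y n"
proof -
  obtain k where k: "n = Suc k" using n by (cases n) auto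
  have "t n = r" using P by (simp add: is_partition_def)
  thus ?thesis using seg_end[OF P n] unfolding motion_def k by simp
qed

lemma fine_le:
  assumes "fineness t n \<le> d" "i < n"
  shows "t (Suc i) - t i \<le> d"
proof -
  have "{t (Suc i) - t i | i. i < n} = (\<lambda>i. t (Suc i) - t i) ` {..<n}" by auto
  hence fin: "finite {t (Suc i) - t i | i. i < n}" by simp
  have "t (Suc i) - t i \<le> fineness t n" unfolding fineness_def
    by (rule Max_ge[OF fin]) (use assms(2) in blast)
  thus ?thesis using assms(1) by simp
qed

lemma semi_step:
  fixes x bb v u :: "real^'d" and \<kappa> h :: real
  assumes k: "\<kappa> > 0"
    and le: "psi' \<le> \<phi> (x + h *\<^sub>R v + (bb - h *\<^sub>R v)) + (norm (bb - h *\<^sub>R v))\<^sup>2 / (2 * \<kappa>\<^sup>2)"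
  shows "psi' \<le> (\<phi> (x + bb) + (norm bb)\<^sup>2 / (2 * \<kappa>\<^sup>2)) + h * (((1 / \<kappa>\<^sup>2) *\<^sub>R (- bb)) \<bullet> v)
           + h\<^sup>2 * (norm v)\<^sup>2 / (2 * \<kappa>\<^sup>2)"
proof -
  have e1: "x + h *\<^sub>R v + (bb - h *\<^sub>R v) = x + bb" by simp
  have e2: "(norm (bb - h *\<^sub>R v))\<^sup>2 = (norm bb)\<^sup>2 - 2 * h * (bb \<bullet> v) + h\<^sup>2 * (norm v)\<^sup>2"
    by (simp only: power2_norm_eq_inner inner_diff_left inner_diff_right inner_scaleR_left inner_scaleR_right inner_commute[of v bb]) (simp add: power2_eq_square algebra_simps)
  have e3: "((norm bb)\<^sup>2 - 2 * h * (bb \<bullet> v) + h\<^sup>2 * (norm v)\<^sup>2) / (2 * \<kappa>\<^sup>2)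
      = (norm bb)\<^sup>2 / (2 * \<kappa>\<^sup>2) + h * (((1 / \<kappa>\<^sup>2) *\<^sub>R (- bb)) \<bullet> v) + h\<^sup>2 * (norm v)\<^sup>2 / (2 * \<kappa>\<^sup>2)"
    using k by (simp add: field_simps power2_eq_square)
  show ?thesis using le unfolding e1 e2 e3 by simp
qed

lemma step_arith:
  fixes a a' I J c Hb tm ts e h q Qv l :: real
  assumes "a + I \<le> c - Hb * tm + e * tm" "a' \<le> a + h * q + Qv" "Qv \<le> h * (e / 2)"
    "J \<le> h * (l + e / 2)" "h * Hb \<le> h * (- q - l)" "ts = tm + h"
  shows "a' + (I + J) \<le> c - Hb * ts + e * ts"
proof -
  have "h * (l + e / 2) = h * l + h * e / 2" "h * (- q - l) = - (h * q) - h * l"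
    "Hb * ts = Hb * tm + h * Hb" "e * ts = e * tm + h * e" "h * (e / 2) = h * e / 2"
    using assms(6) by (simp_all add: algebra_simps)
  thus ?thesis using assms(1-5) by linarith
qed

lemma amgm:
  fixes C u \<kappa> :: real
  assumes "\<kappa> > 0"
  shows "C * u \<le> u\<^sup>2 / (2 * \<kappa>\<^sup>2) + C\<^sup>2 * \<kappa>\<^sup>2 / 2"
proof -
  have "0 \<le> (u / \<kappa> - C * \<kappa>)\<^sup>2 / 2" by simp
  also have "\<dots> = u\<^sup>2 / (2 * \<kappa>\<^sup>2) + C\<^sup>2 * \<kappa>\<^sup>2 / 2 - C * u"
    using assms by (simp add: field_simps power2_eq_square)
  finally show ?thesis by simp
qed


theorem theorem1:
  fixes L :: "real^'d \<Rightarrow> real^'d \<Rightarrow> real"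
    and \<phi> :: "real^'d \<Rightarrow> real"
    and Hbar :: real
    and b vv :: "real \<Rightarrow> real^'d \<Rightarrow> real^'d"
    and \<epsilon> :: real
  assumes L_cont: "continuous_on UNIV (\<lambda>(x, v). L x v)"
    and L_per: "\<And>v. periodic (\<lambda>x. L x v)"
    and L_superlin: "filterlim (\<lambda>v. (INF x. L x v) / norm v) at_top at_infinity"
    and \<phi>_per: "periodic \<phi>"
    and \<phi>_lip: "\<exists>C. C-lipschitz_on UNIV \<phi>"
    and super: "supersolution L \<phi> Hbar"
    and b_per: "\<And>\<kappa>. periodic (b \<kappa>)"
    and b_min: "\<And>\<kappa> x. \<kappa> > 0 \<Longrightarrow>
        \<phi> (x + b \<kappa> x) + (norm (b \<kappa> x))\<^sup>2 / (2 * \<kappa>\<^sup>2) = moreau_yosida \<phi> \<kappa> x"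
    and vv_per: "\<And>\<kappa>. periodic (vv \<kappa>)"
    and vv_max: "\<And>\<kappa> x w. \<kappa> > 0 \<Longrightarrow>
        - ((1 / \<kappa>\<^sup>2) *\<^sub>R (- b \<kappa> x)) \<bullet> w - L (x + b \<kappa> x) w
          \<le> - ((1 / \<kappa>\<^sup>2) *\<^sub>R (- b \<kappa> x)) \<bullet> vv \<kappa> x - L (x + b \<kappa> x) (vv \<kappa> x)"
    and eps: "\<epsilon> > 0"
  shows "\<exists>\<kappa>0 > 0. \<exists>\<delta> :: real \<Rightarrow> real. (\<forall>\<kappa>\<in>{0<..\<kappa>0}. \<delta> \<kappa> > 0) \<and>
     (\<forall>r > 0. \<forall>\<kappa>\<in>{0<..\<kappa>0}. \<forall>t n. is_partition t n r \<longrightarrow> fineness t n \<le> \<delta> \<kappa> \<longrightarrow>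
        (\<forall>y. \<phi> (motion (vv \<kappa>) t n y r)
              + integral {0..r} (\<lambda>s. L (motion (vv \<kappa>) t n y s) (control (vv \<kappa>) t n y s))
            \<le> \<phi> y - Hbar * r + (r + 1) * \<epsilon>))"
proof -
  obtain C where lip: "C-lipschitz_on UNIV \<phi>" using \<phi>_lip by blast
  have C0: "C \<ge> 0" using lip by (rule lipschitz_on_nonneg)
  have lipd: "\<phi> a - \<phi> a' \<le> C * norm (a - a')" for a a'
    using lipschitz_onD[OF lip, of a a'] by (simp add: dist_real_def dist_norm)
  define psi where "psi = (\<lambda>\<kappa> x. \<phi> (x + b \<kappa> x) + (norm (b \<kappa> x))\<^sup>2 / (2 * \<kappa>\<^sup>2))"
  define p where "p = (\<lambda>\<kappa> x. (1 / \<kappa>\<^sup>2) *\<^sub>R (- b \<kappa> x))"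
  have F1: "psi \<kappa> x \<le> \<phi> (x + u) + (norm u)\<^sup>2 / (2 * \<kappa>\<^sup>2)" if k: "\<kappa> > 0" for \<kappa> x u
  proof -
    have "bdd_below (range (\<lambda>u. \<phi> (x + u) + (norm u)\<^sup>2 / (2 * \<kappa>\<^sup>2)))"
    proof (rule bdd_belowI2)
      fix u
      have "\<phi> x - \<phi> (x + u) \<le> C * norm u" using lipd[of x "x + u"] by (simp add: norm_minus_commute)
      moreover have "C * norm u \<le> (norm u)\<^sup>2 / (2 * \<kappa>\<^sup>2) + C\<^sup>2 * \<kappa>\<^sup>2 / 2" by (rule amgm[OF k])
      ultimately show "\<phi> x - C\<^sup>2 * \<kappa>\<^sup>2 / 2 \<le> \<phi> (x + u) + (norm u)\<^sup>2 / (2 * \<kappa>\<^sup>2)" by linarith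
    qed
    hence "moreau_yosida \<phi> \<kappa> x \<le> \<phi> (x + u) + (norm u)\<^sup>2 / (2 * \<kappa>\<^sup>2)"
      unfolding moreau_yosida_def by (rule cINF_lower) simp
    thus ?thesis using b_min[OF k, of x] by (simp add: psi_def)
  qed
  have F4: "psi \<kappa> x \<le> \<phi> x" if k: "\<kappa> > 0" for \<kappa> x
    using F1[OF k, of x 0] by simp
  have F2: "norm (b \<kappa> x) \<le> 2 * C * \<kappa>\<^sup>2" if k: "\<kappa> > 0" for \<kappa> x
  proof -
    let ?b = "b \<kappa> x"
    have "\<phi> (x + ?b) + (norm ?b)\<^sup>2 / (2 * \<kappa>\<^sup>2) \<le> \<phi> x" using F4[OF k, of x] by (simp add: psi_def)
    moreover have "\<phi> x - \<phi> (x + ?b) \<le> C * norm ?b" using lipd[of x "x + ?b"] by (simp add: norm_minus_commute)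
    ultimately have "(norm ?b)\<^sup>2 / (2 * \<kappa>\<^sup>2) \<le> C * norm ?b" by linarith
    hence "(norm ?b)\<^sup>2 \<le> 2 * C * \<kappa>\<^sup>2 * norm ?b" using k by (simp add: field_simps)
    hence "norm ?b * norm ?b \<le> (2 * C * \<kappa>\<^sup>2) * norm ?b" by (simp add: power2_eq_square)
    thus ?thesis
      by (cases "norm ?b = 0") (use k C0 in auto)
  qed
  have F3: "\<phi> x \<le> psi \<kappa> x + 2 * C\<^sup>2 * \<kappa>\<^sup>2" if k: "\<kappa> > 0" for \<kappa> x
  proof -
    have "\<phi> x - \<phi> (x + b \<kappa> x) \<le> C * norm (b \<kappa> x)" using lipd[of x "x + b \<kappa> x"] by (simp add: norm_minus_commute)
    also have "\<dots> \<le> C * (2 * C * \<kappa>\<^sup>2)" using F2[OF k, of x] C0 by (simp add: mult_left_mono)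
    also have "\<dots> = 2 * C\<^sup>2 * \<kappa>\<^sup>2" by (simp add: power2_eq_square)
    finally have "\<phi> x - \<phi> (x + b \<kappa> x) \<le> 2 * C\<^sup>2 * \<kappa>\<^sup>2" .
    moreover have "0 \<le> (norm (b \<kappa> x))\<^sup>2 / (2 * \<kappa>\<^sup>2)" by simp
    ultimately show ?thesis unfolding psi_def by linarith
  qed
  have F5: "Hbar \<le> - (p \<kappa> x \<bullet> vv \<kappa> x) - L (x + b \<kappa> x) (vv \<kappa> x)" if k: "\<kappa> > 0" for \<kappa> x
  proof -
    have mn: "\<phi> (x + b \<kappa> x) + (norm (b \<kappa> x))\<^sup>2 / (2 * \<kappa>\<^sup>2) \<le> \<phi> (x + u) + (norm u)\<^sup>2 / (2 * \<kappa>\<^sup>2)" for u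
      using F1[OF k, of x u] by (simp add: psi_def)
    have "p \<kappa> x \<in> hadamard_subdiff \<phi> (x + b \<kappa> x)" unfolding p_def by (rule subdiff_lemma[OF k mn])
    hence "Hbar \<le> hamiltonian L (x + b \<kappa> x) (- p \<kappa> x)" using super unfolding supersolution_def by blast
    also have "\<dots> \<le> - (p \<kappa> x \<bullet> vv \<kappa> x) - L (x + b \<kappa> x) (vv \<kappa> x)"
      unfolding hamiltonian_def
      by (rule cSUP_least) (use vv_max[OF k, of x] in \<open>auto simp: p_def\<close>)
    finally show ?thesis .
  qed
  have Lc: "continuous_on UNIV (\<lambda>x. L x v)" for v
    by (rule continuous_on_compose2[OF L_cont, of UNIV "\<lambda>x. (x, v)", simplified]) (auto intro: continuous_intros)
  define M where "M = 2 * C + \<bar>Hbar\<bar> + 1"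
  have "eventually (\<lambda>v. M \<le> (INF x. L x v) / norm v) at_infinity"
    using L_superlin by (simp add: filterlim_at_top)
  then obtain R0 where R0: "\<And>v. R0 \<le> norm v \<Longrightarrow> M \<le> (INF x. L x v) / norm v"
    unfolding eventually_at_infinity by blast
  define R where "R = max 1 R0"
  have R1: "R \<ge> 1" by (simp add: R_def)
  have F6: "norm (vv \<kappa> x) \<le> R" if k: "\<kappa> > 0" for \<kappa> x
  proof (rule ccontr)
    let ?v = "vv \<kappa> x"
    assume "\<not> norm ?v \<le> R"
    hence big: "norm ?v > R" by simp
    hence nv: "norm ?v > 0" "norm ?v \<ge> 1" "R0 \<le> norm ?v" using R1 by (auto simp: R_def)
    have "M \<le> (INF x. L x ?v) / norm ?v" using R0 nv(3) by blast
    hence "M * norm ?v \<le> (INF x. L x ?v)" using nv(1) by (simp add: pos_le_divide_eq)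
    also have "\<dots> \<le> L (x + b \<kappa> x) ?v"
      by (rule cINF_lower[OF per_bdd_below[OF L_per Lc]]) simp
    finally have Lb: "M * norm ?v \<le> L (x + b \<kappa> x) ?v" .
    have "- (p \<kappa> x \<bullet> ?v) \<le> norm (p \<kappa> x) * norm ?v"
      using norm_cauchy_schwarz[of "- p \<kappa> x" ?v] by simp
    also have "norm (p \<kappa> x) \<le> 2 * C"
      using F2[OF k, of x] k by (simp add: p_def divide_simps)
    hence "norm (p \<kappa> x) * norm ?v \<le> 2 * C * norm ?v" using nv by (simp add: mult_right_mono)
    finally have pb: "- (p \<kappa> x \<bullet> ?v) \<le> 2 * C * norm ?v" .
    have "Hbar \<le> 2 * C * norm ?v - M * norm ?v" using F5[OF k, of x] Lb pb by linarith
    also have "\<dots> = - (\<bar>Hbar\<bar> + 1) * norm ?v" by (simp add: M_def algebra_simps)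
    also have "\<dots> \<le> - (\<bar>Hbar\<bar> + 1)"
    proof -
      have "(\<bar>Hbar\<bar> + 1) * 1 \<le> (\<bar>Hbar\<bar> + 1) * norm ?v"
        using mult_left_mono[OF nv(2), of "\<bar>Hbar\<bar> + 1"] by linarith
      thus ?thesis by (simp add: algebra_simps)
    qed
    finally show False by linarith
  qed
  have e2: "\<epsilon> / 2 > 0" using eps by simp
  obtain \<eta> where \<eta>: "\<eta> > 0" "\<And>a a' v. norm v \<le> R \<Longrightarrow> dist a a' \<le> \<eta> \<Longrightarrow> \<bar>L a v - L a' v\<bar> \<le> \<epsilon> / 2"
    using per_uc[OF L_cont L_per e2, of R] by blast
  define \<kappa>0 where "\<kappa>0 = min 1 (min (\<eta> / (4 * C + 1)) (\<epsilon> / (2 * C\<^sup>2 + 1)))"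
  define \<delta> where "\<delta> = (\<lambda>\<kappa>. min (\<eta> / (2 * R + 1)) (\<epsilon> * \<kappa>\<^sup>2 / (R\<^sup>2 + 1)))"
  have a1: "4 * C + 1 > 0" using C0 by linarith
  have a2: "2 * C\<^sup>2 + 1 > 0" using zero_le_power2[of C] by linarith
  have a3: "2 * R + 1 > 0" using R1 by linarith
  have a4: "R\<^sup>2 + 1 > 0" using zero_le_power2[of R] by linarith
  show ?thesis
  proof (intro exI[of _ \<kappa>0] exI[of _ \<delta>] conjI allI impI ballI)
    have "\<eta> / (4 * C + 1) > 0" using \<eta>(1) a1 by (rule divide_pos_pos)
    moreover have "\<epsilon> / (2 * C\<^sup>2 + 1) > 0" using eps a2 by (rule divide_pos_pos)
    ultimately show "\<kappa>0 > 0" unfolding \<kappa>0_def by simp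
    fix \<kappa> :: real assume "\<kappa> \<in> {0<..\<kappa>0}"
    hence "\<kappa> > 0" by simp
    hence "\<epsilon> * \<kappa>\<^sup>2 > 0" using eps by simp
    hence "\<epsilon> * \<kappa>\<^sup>2 / (R\<^sup>2 + 1) > 0" using a4 by (rule divide_pos_pos)
    moreover have "\<eta> / (2 * R + 1) > 0" using \<eta>(1) a3 by (rule divide_pos_pos)
    ultimately show "\<delta> \<kappa> > 0" unfolding \<delta>_def by simp
  next
    fix r \<kappa> :: real and t :: "nat \<Rightarrow> real" and n :: nat and y :: "real^'d"
    assume r: "r > 0" and kk: "\<kappa> \<in> {0<..\<kappa>0}" and P: "is_partition t n r" and fin: "fineness t n \<le> \<delta> \<kappa>"
    show "\<phi> (motion (vv \<kappa>) t n y r)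
              + integral {0..r} (\<lambda>s. L (motion (vv \<kappa>) t n y s) (control (vv \<kappa>) t n y s))
            \<le> \<phi> y - Hbar * r + (r + 1) * \<epsilon>"
    proof -
    have k: "\<kappa> > 0" "\<kappa> \<le> \<kappa>0" using kk by auto
    have c1: "\<kappa>0 \<le> 1" unfolding \<kappa>0_def by (rule min.cobounded1)
    have c2: "\<kappa>0 \<le> \<eta> / (4 * C + 1)" unfolding \<kappa>0_def by (rule min.coboundedI2, rule min.cobounded1)
    have c3: "\<kappa>0 \<le> \<epsilon> / (2 * C\<^sup>2 + 1)" unfolding \<kappa>0_def by (rule min.coboundedI2, rule min.cobounded2)
    have k1: "\<kappa> \<le> 1" using k(2) c1 by linarith
    have kq: "\<kappa>\<^sup>2 \<le> \<kappa>" unfolding power2_eq_square using mult_right_mono[OF k1 less_imp_le[OF k(1)]] by simp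
    have kqa: "\<kappa>\<^sup>2 \<le> \<eta> / (4 * C + 1)" "\<kappa>\<^sup>2 \<le> \<epsilon> / (2 * C\<^sup>2 + 1)"
      using kq k(2) c2 c3 by linarith+
    have kb1: "2 * C * \<kappa>\<^sup>2 \<le> \<eta> / 2"
    proof -
      have "\<kappa>\<^sup>2 * (4 * C + 1) \<le> \<eta>" using kqa(1) a1 by (simp only: pos_le_divide_eq)
      moreover have "\<kappa>\<^sup>2 * (4 * C + 1) = 4 * (C * \<kappa>\<^sup>2) + \<kappa>\<^sup>2" by (simp add: algebra_simps)
      ultimately show ?thesis using zero_le_power2[of \<kappa>] by linarith
    qed
    have kb2: "2 * C\<^sup>2 * \<kappa>\<^sup>2 \<le> \<epsilon>"
    proof -
      have "\<kappa>\<^sup>2 * (2 * C\<^sup>2 + 1) \<le> \<epsilon>" using kqa(2) a2 by (simp only: pos_le_divide_eq)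
      moreover have "\<kappa>\<^sup>2 * (2 * C\<^sup>2 + 1) = 2 * C\<^sup>2 * \<kappa>\<^sup>2 + \<kappa>\<^sup>2" by (simp add: algebra_simps)
      ultimately show ?thesis using zero_le_power2[of \<kappa>] by linarith
    qed
    have hb: "h * R \<le> \<eta> / 2" "h * h * R\<^sup>2 / (2 * \<kappa>\<^sup>2) \<le> h * (\<epsilon> / 2)"
      if h: "0 \<le> h" "h \<le> \<delta> \<kappa>" for h
    proof -
      have "h \<le> \<eta> / (2 * R + 1)" using h(2) unfolding \<delta>_def by (rule order_trans) (rule min.cobounded1)
      hence "h * (2 * R + 1) \<le> \<eta>" using a3 by (simp only: pos_le_divide_eq)
      moreover have "h * (2 * R + 1) = 2 * (h * R) + h" by (simp add: algebra_simps)
      ultimately show "h * R \<le> \<eta> / 2" using h by linarith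
      have "h \<le> \<epsilon> * \<kappa>\<^sup>2 / (R\<^sup>2 + 1)" using h(2) unfolding \<delta>_def by (rule order_trans) (rule min.cobounded2)
      hence "h * (R\<^sup>2 + 1) \<le> \<epsilon> * \<kappa>\<^sup>2" using a4 by (simp only: pos_le_divide_eq)
      moreover have "h * (R\<^sup>2 + 1) = h * R\<^sup>2 + h" by (simp add: algebra_simps)
      ultimately have hr: "h * R\<^sup>2 \<le> \<epsilon> * \<kappa>\<^sup>2" using h by linarith
      have kk2: "2 * \<kappa>\<^sup>2 > 0" using k(1) by simp
      have "h * R\<^sup>2 / (2 * \<kappa>\<^sup>2) \<le> \<epsilon> * \<kappa>\<^sup>2 / (2 * \<kappa>\<^sup>2)"
        using hr kk2 by (simp only: divide_right_mono less_imp_le)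
      also have "\<dots> = \<epsilon> / 2" using k(1) by simp
      finally have "h * R\<^sup>2 / (2 * \<kappa>\<^sup>2) \<le> \<epsilon> / 2" .
      from mult_left_mono[OF this h(1)]
      show "h * h * R\<^sup>2 / (2 * \<kappa>\<^sup>2) \<le> h * (\<epsilon> / 2)" by (metis (no_types) mult.assoc times_divide_eq_right)
    qed
    have n0: "n > 0"
    proof (rule ccontr)
      assume "\<not> n > 0" hence "n = 0" by simp
      thus False using P r by (simp add: is_partition_def)
    qed
    define X where "X = motion_node (vv \<kappa>) t y"
    define f where "f = (\<lambda>s. L (motion (vv \<kappa>) t n y s) (control (vv \<kappa>) t n y s))"
    have t0: "t 0 = 0" and tn: "t n = r" using P by (auto simp: is_partition_def)
    have ind: "\<exists>I. (f has_integral I) {0..t m} \<and> psi \<kappa> (X m) + I \<le> psi \<kappa> y - Hbar * t m + \<epsilon> * t m"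
      if "m \<le> n" for m
      using that
    proof (induction m)
      case 0
      show ?case using t0 by (intro exI[of _ 0]) (simp add: X_def has_integral_refl)
    next
      case (Suc m)
      hence mn: "m < n" by simp
      obtain I where I: "(f has_integral I) {0..t m}" "psi \<kappa> (X m) + I \<le> psi \<kappa> y - Hbar * t m + \<epsilon> * t m"
        using Suc by auto
      define x where "x = X m"
      define bb where "bb = b \<kappa> x"
      define v where "v = vv \<kappa> x"
      define h where "h = t (Suc m) - t m"
      have h0: "h > 0" using P mn by (simp add: h_def is_partition_def)
      have hd: "h \<le> \<delta> \<kappa>" using fine_le[OF fin mn] by (simp add: h_def)
      have tm0: "0 \<le> t m" using part_mono_le[OF P, of 0 m] mn t0 by simp
      have vR: "norm v \<le> R" using F6[OF k(1)] by (simp add: v_def)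
      have bC: "norm bb \<le> 2 * C * \<kappa>\<^sup>2" using F2[OF k(1)] by (simp add: bb_def)
      define gf where "gf = (\<lambda>s. L (x + (s - t m) *\<^sub>R v) v)"
      have gc: "continuous_on {t m..t (Suc m)} gf"
        unfolding gf_def
        by (rule continuous_on_compose2[OF L_cont, of _ "\<lambda>s. (x + (s - t m) *\<^sub>R v, v)", simplified])
           (auto intro!: continuous_intros)
      define J where "J = integral {t m..t (Suc m)} gf"
      have gJ: "(gf has_integral J) {t m..t (Suc m)}"
        unfolding J_def by (rule integrable_integral[OF integrable_continuous_real[OF gc]])
      have fJ: "(f has_integral J) {t m..t (Suc m)}"
      proof (rule has_integral_spike_finite[OF _ _ gJ, where S="{t (Suc m)}"])
        fix s assume s: "s \<in> {t m..t (Suc m)} - {t (Suc m)}"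
        hence si: "seg_index t n s = m" using seg_idx[OF P mn] by auto
        show "f s = gf s" unfolding f_def gf_def motion_def control_def Let_def si
          by (simp add: x_def v_def X_def)
      qed simp
      have gle: "gf s \<le> L (x + bb) v + \<epsilon> / 2" if s: "s \<in> {t m..t (Suc m)}" for s
      proof -
        have "norm ((s - t m) *\<^sub>R v) \<le> h * R"
          using s vR h0 by (auto simp: h_def intro!: mult_mono)
        hence "dist (x + bb) (x + (s - t m) *\<^sub>R v) \<le> 2 * C * \<kappa>\<^sup>2 + h * R"
          using bC norm_triangle_ineq4[of bb "(s - t m) *\<^sub>R v"] by (simp add: dist_norm)
        also have "\<dots> \<le> \<eta>" using kb1 hb(1)[of h] h0 hd by simp
        finally have "\<bar>L (x + bb) v - L (x + (s - t m) *\<^sub>R v) v\<bar> \<le> \<epsilon> / 2" by (rule \<eta>(2)[OF vR])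
        thus ?thesis unfolding gf_def by linarith
      qed
      have Jb: "J \<le> h * (L (x + bb) v + \<epsilon> / 2)"
      proof -
        have c: "((\<lambda>s. L (x + bb) v + \<epsilon> / 2) has_integral (h * (L (x + bb) v + \<epsilon> / 2))) {t m..t (Suc m)}"
          using has_integral_const_real[of "L (x + bb) v + \<epsilon> / 2" "t m" "t (Suc m)"] h0 by (simp add: h_def)
        show ?thesis by (rule has_integral_le[OF gJ c gle])
      qed
      have XS: "X (Suc m) = x + h *\<^sub>R v" by (simp add: X_def x_def h_def v_def)
      have semi: "psi \<kappa> (X (Suc m)) \<le> psi \<kappa> x + h * (p \<kappa> x \<bullet> v) + h\<^sup>2 * (norm v)\<^sup>2 / (2 * \<kappa>\<^sup>2)"
        unfolding XS psi_def p_def bb_def[symmetric]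
        by (rule semi_step[OF k(1)]) (use F1[OF k(1), of "x + h *\<^sub>R v" "bb - h *\<^sub>R v"] in \<open>simp add: psi_def\<close>)
      have Q: "h\<^sup>2 * (norm v)\<^sup>2 / (2 * \<kappa>\<^sup>2) \<le> h * (\<epsilon> / 2)"
      proof -
        have "(norm v)\<^sup>2 \<le> R\<^sup>2" using vR by (simp add: power_mono)
        hence "h\<^sup>2 * (norm v)\<^sup>2 / (2 * \<kappa>\<^sup>2) \<le> h * h * R\<^sup>2 / (2 * \<kappa>\<^sup>2)"
          using k(1) by (simp add: divide_right_mono power2_eq_square mult_left_mono)
        thus ?thesis using hb(2)[OF less_imp_le[OF h0] hd] by linarith
      qed
      have H5: "h * Hbar \<le> h * (- (p \<kappa> x \<bullet> v) - L (x + bb) v)"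
        unfolding v_def bb_def by (rule mult_left_mono[OF F5[OF k(1), of x] less_imp_le[OF h0]])
      have comb: "(f has_integral (I + J)) {0..t (Suc m)}"
        by (rule has_integral_combine[OF tm0 _ I(1) fJ]) (use h0 in \<open>simp add: h_def\<close>)
      show ?case
      proof (intro exI[of _ "I + J"] conjI comb)
        show "psi \<kappa> (X (Suc m)) + (I + J) \<le> psi \<kappa> y - Hbar * t (Suc m) + \<epsilon> * t (Suc m)"
          by (rule step_arith[OF I(2)[folded x_def] semi Q Jb H5]) (simp add: h_def)
      qed
    qed
    obtain I where I: "(f has_integral I) {0..r}" "psi \<kappa> (X n) + I \<le> psi \<kappa> y - Hbar * r + \<epsilon> * r"
      using ind[of n] tn by auto
    have "integral {0..r} f = I" using I(1) by (rule integral_unique)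
    hence "integral {0..r} (\<lambda>s. L (motion (vv \<kappa>) t n y s) (control (vv \<kappa>) t n y s)) = I"
      by (simp only: f_def)
    moreover have "\<phi> (motion (vv \<kappa>) t n y r) = \<phi> (X n)" unfolding X_def by (simp only: motion_end[OF P n0])
    moreover have "(r + 1) * \<epsilon> = \<epsilon> * r + \<epsilon>" by (simp add: algebra_simps)
    moreover have "\<phi> (X n) \<le> psi \<kappa> (X n) + \<epsilon>" using F3[OF k(1), of "X n"] kb2 by linarith
    moreover have "psi \<kappa> y \<le> \<phi> y" by (rule F4[OF k(1)])
    ultimately show "\<phi> (motion (vv \<kappa>) t n y r)
              + integral {0..r} (\<lambda>s. L (motion (vv \<kappa>) t n y s) (control (vv \<kappa>) t n y s))
            \<le> \<phi> y - Hbar * r + (r + 1) * \<epsilon>"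
      using I(2) by linarith
    qed
  qed
qed
end
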